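(* Let $r\ge 3$ and $0<l<r-1$, and let $d_1,\dots,d_{l-1},d_{l+2},\dots,d_{r-1}\in\{0,1\}$. Then \[ C^{(d_1,\dots,d_{l-1},0,1,d_{l+2},\dots,d_{r-1})}=C^{(d_1,\dots,d_{l-1})}\cdot C^{(1,d_{l+2},\dots,d_{r-1})}. \] Here the left side is a coefficient attached to $\mathbb Z_{\ge0}^r$ (with $r-1$ indices), the first factor to $\mathbb Z_{\ge0}^{l}$ (with $l-1$ indices) and the second to $\mathbb Z_{\ge0}^{r-l}$ (with $r-l-1$ indices).
   Context: Bernoulli numbers $B_n$ are defined by $\sum_{n\ge0}B_n x^n/n! = xe^x/(e^x-1)$ (so $B_1=+1/2$). For $r\ge1$ and a finite set $S\subset\mathbb Z_{\ge0}^r$, put $C(S)=(-1)^r\sum_{(n_1,\dots,n_r)\in S}\prod_{j=1}^r \frac{B_{n_j}}{n_j!}$. For $r\ge1$, $1\le j\le r-1$ define $S^{(0)}_{j,r}=\{(n_1,\dots,n_r)\in\mathbb Z_{\ge0}^r: n_1+\dots+n_r=r,\ n_{j+1}+\dots+n_r\le r-j\}$ and $S^{(1)}_{j,r}=\{(n_1,\dots,n_r)\in\mathbb Z_{\ge0}^r: n_1+\dots+n_r=r,\ n_1+\dots+n_j<j\}$. For $d_1,\dots,d_{r-1}\in\{0,1\}$ let $S^{(d_1,\dots,d_{r-1})}=\bigcap_{j=1}^{r-1}S^{(d_j)}_{j,r}$ (for $r=1$ this is $S^{()}=\{(1)\}\subset\mathbb Z_{\ge0}^1$), and $C^{(d_1,\dots,d_{r-1})}=C(S^{(d_1,\dots,d_{r-1})})$.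 In particular $C^{()}=-1/2$. *)

theory Defs
  imports Complex_Main "HOL-Computational_Algebra.Formal_Power_Series"
begin

text \<open>Bernoulli numbers with B_1 = +1/2: the coefficients of the exponential
generating function x e^x / (e^x - 1).\<close>
definition bernoulli_plus :: "nat \<Rightarrow> real" where
  "bernoulli_plus n = fact n * fps_nth (fps_X * fps_exp 1 / (fps_exp 1 - 1)) n"

definition C_of :: "nat \<Rightarrow> nat list set \<Rightarrow> real" where
  "C_of r S = (-1) ^ r * (\<Sum>ns\<in>S. (\<Prod>j<r. bernoulli_plus (ns ! j) / fact (ns ! j)))"

definition S0 :: "nat \<Rightarrow> nat \<Rightarrow> nat list set" where
  "S0 j r = {ns. length ns = r \<and> sum_list ns = r \<and> sum_list (drop j ns) \<le> r - j}"

definition S1 :: "nat \<Rightarrow> nat \<Rightarrow> nat list set" where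
  "S1 j r = {ns. length ns = r \<and> sum_list ns = r \<and> sum_list (take j ns) < j}"

definition Sd :: "nat list \<Rightarrow> nat list set" where
  "Sd ds = (let r = length ds + 1 in
     {ns. length ns = r \<and> sum_list ns = r} \<inter>
     (\<Inter>j\<in>{1..r-1}. if ds ! (j - 1) = 0 then S0 j r else S1 j r))"

definition Cd :: "nat list \<Rightarrow> real" where
  "Cd ds = C_of (length ds + 1) (Sd ds)"

end

theory Submission
  imports Defs
begin

definition cnd :: "nat list \<Rightarrow> nat list \<Rightarrow> nat \<Rightarrow> bool" where
  "cnd ds ns j = (if ds ! (j - 1) = 0 then j \<le> sum_list (take j ns) else sum_list (take j ns) < j)"

lemma sum_take_drop: "sum_list ns = sum_list (take j ns) + sum_list (drop j (ns::nat list))"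
  by (metis append_take_drop_id sum_list_append)

lemma Sd_iff: "ns \<in> Sd ds \<longleftrightarrow> length ns = length ds + 1 \<and> sum_list ns = length ds + 1
   \<and> (\<forall>j\<in>{1..length ds}. cnd ds ns j)"
proof -
  have eq: "sum_list ns = length ds + 1 \<Longrightarrow> j \<le> length ds \<Longrightarrow>
     (sum_list (drop j ns) \<le> length ds + 1 - j) = (j \<le> sum_list (take j ns))" for j
    using sum_take_drop[of ns j] by linarith
  have m: "ns \<in> Sd ds \<longleftrightarrow> length ns = length ds + 1 \<and> sum_list ns = length ds + 1 \<and>
     (\<forall>j\<in>{1..length ds}. ns \<in> (if ds!(j-1)=0 then S0 j (length ds+1) else S1 j (length ds+1)))"
    unfolding Sd_def Let_def by auto
  have pj: "length ns = length ds + 1 \<Longrightarrow> sum_list ns = length ds + 1 \<Longrightarrow> j \<in> {1..length ds} \<Longrightarrow>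
     ns \<in> (if ds!(j-1)=0 then S0 j (length ds+1) else S1 j (length ds+1)) \<longleftrightarrow> cnd ds ns j" for j
    using eq[of j] by (simp add: S0_def S1_def cnd_def)
  show ?thesis using m pj by blast
qed

lemma Sd_split:
  "Sd (ds1 @ [0, 1] @ ds2) = (\<lambda>(a,b). a @ b) ` (Sd ds1 \<times> Sd (1 # ds2))"
proof (intro set_eqI iffI)
  fix ns assume H: "ns \<in> Sd (ds1 @ [0, 1] @ ds2)"
  define L1 where "L1 = length ds1"
  define L2 where "L2 = length ds2"
  let ?ds = "ds1 @ [0, 1] @ ds2"
  have len: "length ns = L1 + L2 + 3" and sm: "sum_list ns = L1 + L2 + 3"
    and C: "\<forall>j\<in>{1..L1+L2+2}. cnd ?ds ns j"
    using H unfolding Sd_iff L1_def L2_def by auto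
  define a where "a = take (L1+1) ns"
  define b where "b = drop (L1+1) ns"
  have ns: "ns = a @ b" by (simp add: a_def b_def)
  have la: "length a = L1 + 1" using len by (simp add: a_def)
  have lb: "length b = L2 + 2" using len by (simp add: b_def)
  have c1: "cnd ?ds ns (L1+1)" using C by auto
  have c2: "cnd ?ds ns (L1+2)" using C by auto
  have i1: "?ds ! L1 = 0" by (simp add: L1_def nth_append)
  have i2: "?ds ! (L1+1) = 1" by (simp add: L1_def nth_append)
  have t1: "take (L1+1) ns = a" by (simp add: a_def)
  have t2: "take (L1+2) ns = a @ [b!0]"
    using lb by (simp add: ns take_append la take_Suc_conv_app_nth[of 0 b] numeral_2_eq_2
        del: take_Suc)
  from c1 have sa1: "L1 + 1 \<le> sum_list a" using i1 t1 by (simp add: cnd_def)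
  from c2 have sa2: "sum_list a + b!0 < L1 + 2" using i2 t2 by (simp add: cnd_def)
  have sa: "sum_list a = L1 + 1" and b0: "b!0 = 0" using sa1 sa2 by auto
  have sb: "sum_list b = L2 + 2" using sm sa ns by simp
  have aS: "a \<in> Sd ds1"
    unfolding Sd_iff
  proof (intro conjI ballI)
    show "length a = length ds1 + 1" using la L1_def by simp
    show "sum_list a = length ds1 + 1" using sa L1_def by simp
    fix j assume j: "j \<in> {1..length ds1}"
    then have c: "cnd ?ds ns j" using C L1_def by auto
    have e1: "?ds ! (j-1) = ds1 ! (j-1)" using j by (auto simp: nth_append)
    have e2: "take j ns = take j a" using j la L1_def by (simp add: ns take_append)
    show "cnd ds1 a j" using c unfolding cnd_def e1 e2 .
  qed
  have bS: "b \<in> Sd (1 # ds2)"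
    unfolding Sd_iff
  proof (intro conjI ballI)
    show "length b = length (1 # ds2) + 1" using lb L2_def by simp
    show "sum_list b = length (1 # ds2) + 1" using sb L2_def by simp
    fix j assume j: "j \<in> {1..length (1 # ds2)}"
    show "cnd (1 # ds2) b j"
    proof (cases "j = 1")
      case True
      have "take 1 b = [b!0]" using lb by (cases b) auto
      then show ?thesis using True b0 by (simp add: cnd_def)
    next
      case False
      then have j2: "2 \<le> j" "j \<le> L2 + 1" using j L2_def by auto
      have c: "cnd ?ds ns (L1+1+j)" using C j2 by auto
      have e1: "?ds ! (L1+1+j-1) = (1 # ds2) ! (j-1)"
        using j2 L1_def by (auto simp: nth_append)
      have e2: "take (L1+1+j) ns = a @ take j b" using la by (simp add: ns take_append)
      show ?thesis using c unfolding cnd_def e1 e2 using sa by (simp split: if_splits)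
    qed
  qed
  show "ns \<in> (\<lambda>(a,b). a @ b) ` (Sd ds1 \<times> Sd (1 # ds2))"
    using aS bS ns by auto
next
  fix ns assume "ns \<in> (\<lambda>(a,b). a @ b) ` (Sd ds1 \<times> Sd (1 # ds2))"
  then obtain a b where ns: "ns = a @ b" and aS: "a \<in> Sd ds1" and bS: "b \<in> Sd (1 # ds2)"
    by auto
  define L1 where "L1 = length ds1"
  define L2 where "L2 = length ds2"
  let ?ds = "ds1 @ [0, 1] @ ds2"
  have la: "length a = L1 + 1" and sa: "sum_list a = L1 + 1"
    and Ca: "\<forall>j\<in>{1..L1}. cnd ds1 a j" using aS unfolding Sd_iff L1_def by auto
  have lb: "length b = L2 + 2" and sb: "sum_list b = L2 + 2"
    and Cb: "\<forall>j\<in>{1..L2+1}. cnd (1#ds2) b j" using bS unfolding Sd_iff L2_def by auto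
  have "cnd (1#ds2) b 1" using Cb by auto
  then have b0: "sum_list (take 1 b) = 0" by (simp add: cnd_def)
  show "ns \<in> Sd ?ds"
    unfolding Sd_iff
  proof (intro conjI ballI)
    show "length ns = length ?ds + 1" using la lb L1_def L2_def ns by simp
    show "sum_list ns = length ?ds + 1" using sa sb L1_def L2_def ns by simp
    fix j assume j: "j \<in> {1..length ?ds}"
    then have j': "1 \<le> j" "j \<le> L1 + L2 + 2" using L1_def L2_def by auto
    consider "j \<le> L1" | "j = L1 + 1" | "j = L1 + 2" | "L1 + 3 \<le> j" by linarith
    then show "cnd ?ds ns j"
    proof cases
      case 1
      then have "cnd ds1 a j" using Ca j' by auto
      moreover have "?ds ! (j-1) = ds1 ! (j-1)" using 1 j' L1_def by (auto simp: nth_append)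
      moreover have "take j ns = take j a" using 1 la by (simp add: ns take_append)
      ultimately show ?thesis by (simp add: cnd_def)
    next
      case 2
      have "?ds ! (j-1) = 0" using 2 L1_def by (simp add: nth_append)
      moreover have "take j ns = a" using 2 la by (simp add: ns take_append)
      ultimately show ?thesis using sa 2 by (simp add: cnd_def)
    next
      case 3
      have "?ds ! (j-1) = 1" using 3 L1_def by (simp add: nth_append)
      moreover have "take j ns = a @ take 1 b" using 3 la by (simp add: ns take_append)
      ultimately show ?thesis using sa b0 3 by (simp add: cnd_def)
    next
      case 4
      define k where "k = j - L1 - 1"
      have k: "2 \<le> k" "k \<le> L2 + 1" "j = L1 + 1 + k" using 4 j' k_def by auto
      have "cnd (1#ds2) b k" using Cb k by auto
      moreover have "?ds ! (j-1) = (1 # ds2) ! (k-1)"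
        using k L1_def by (auto simp: nth_append)
      moreover have "take j ns = a @ take k b" using k la by (simp add: ns take_append)
      ultimately show ?thesis using sa k by (simp add: cnd_def)
    qed
  qed
qed

theorem theorem2p3:
  fixes r l :: nat and ds1 ds2 :: "nat list"
  assumes "r \<ge> 3" and "0 < l" and "l < r - 1"
    and "length ds1 = l - 1" and "length ds2 = r - l - 2"
    and "set ds1 \<subseteq> {0, 1}" and "set ds2 \<subseteq> {0, 1}"
  shows "Cd (ds1 @ [0, 1] @ ds2) = Cd ds1 * Cd (1 # ds2)"
proof -
  define f where "f = (\<lambda>x::nat. bernoulli_plus x / fact x)"
  define L1 where "L1 = length ds1"
  define L2 where "L2 = length ds2"
  define A where "A = Sd ds1"
  define B where "B = Sd (1 # ds2)"
  have lA: "\<And>a. a \<in> A \<Longrightarrow> length a = L1 + 1" unfolding A_def Sd_iff L1_def by auto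
  have lB: "\<And>b. b \<in> B \<Longrightarrow> length b = L2 + 2" unfolding B_def Sd_iff L2_def by auto
  have inj: "inj_on (\<lambda>(a,b). a @ b) (A \<times> B)"
    by (auto simp: inj_on_def lA dest!: lA)
  have prod_split: "(\<Prod>j<L1 + L2 + 3. f ((a @ b) ! j)) = (\<Prod>j<L1+1. f (a ! j)) * (\<Prod>j<L2+2. f (b ! j))"
    if "length a = L1 + 1" for a b
  proof -
    have U: "{..<L1 + L2 + 3} = {..<L1+1} \<union> {L1+1..<L1+1+(L2+2)}" by auto
    have "(\<Prod>j<L1 + L2 + 3. f ((a @ b) ! j)) =
       (\<Prod>j<L1+1. f ((a @ b) ! j)) * (\<Prod>j\<in>{L1+1..<L1+1+(L2+2)}. f ((a @ b) ! j))"
      unfolding U by (rule prod.union_disjoint) auto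
    also have "(\<Prod>j<L1+1. f ((a @ b) ! j)) = (\<Prod>j<L1+1. f (a ! j))"
      using that by (intro prod.cong) (auto simp: nth_append)
    also have "(\<Prod>j\<in>{L1+1..<L1+1+(L2+2)}. f ((a @ b) ! j)) = (\<Prod>j<L2+2. f (b ! j))"
    proof -
      have "(\<Prod>j\<in>{L1+1..<L1+1+(L2+2)}. f ((a @ b) ! j)) = (\<Prod>j\<in>{0..<L2+2}. f ((a @ b) ! (j + (L1+1))))"
        using prod.shift_bounds_nat_ivl[of "\<lambda>j. f ((a @ b) ! j)" 0 "L1+1" "L2+2"] by (simp add: add.commute)
      also have "\<dots> = (\<Prod>j<L2+2. f (b ! j))"
        using that by (intro prod.cong) (auto simp: nth_append)
      finally show ?thesis .
    qed
    finally show ?thesis .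
  qed
  have "Cd (ds1 @ [0, 1] @ ds2) = (-1) ^ (L1 + L2 + 3) *
     (\<Sum>ns\<in>(\<lambda>(a,b). a @ b) ` (A \<times> B). \<Prod>j<L1 + L2 + 3. f (ns ! j))"
  proof -
    have lenE: "length (ds1 @ [0,1] @ ds2) + 1 = L1 + L2 + 3" by (simp add: L1_def L2_def)
    show ?thesis unfolding Cd_def C_of_def lenE Sd_split A_def B_def f_def by (rule refl)
  qed
  also have "(\<Sum>ns\<in>(\<lambda>(a,b). a @ b) ` (A \<times> B). \<Prod>j<L1 + L2 + 3. f (ns ! j))
      = (\<Sum>(a,b)\<in>A \<times> B. \<Prod>j<L1 + L2 + 3. f ((a @ b) ! j))"
    by (subst sum.reindex[OF inj]) (simp add: case_prod_unfold)
  also have "\<dots> = (\<Sum>(a,b)\<in>A \<times> B. (\<Prod>j<L1+1. f (a ! j)) * (\<Prod>j<L2+2. f (b ! j)))"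
    by (intro sum.cong) (auto simp: prod_split lA)
  also have "\<dots> = (\<Sum>a\<in>A. \<Prod>j<L1+1. f (a ! j)) * (\<Sum>b\<in>B. \<Prod>j<L2+2. f (b ! j))"
    by (simp add: sum_product sum.cartesian_product)
  finally show ?thesis
    unfolding Cd_def C_of_def A_def B_def f_def L1_def L2_def
    by (simp add: power_add algebra_simps)
qed

end
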